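(* Let $G=(V,E)$ be a connected almost bipartite permutation graph. Then every hole in $G$ is a dominating set of $G$ (every vertex of $G$ lies on the hole or has a neighbor on it).
   Context: All graphs are finite, simple, undirected. A hole is an induced cycle on at least five vertices. $K_3$ is the triangle and $C_k$ the cycle on $k$ vertices. $T_2$ is the tree on 7 vertices obtained from the claw $K_{1,3}$ by subdividing each of its three edges once. $X_2$ is the 7-vertex graph obtained from a 4-cycle by attaching one new pendant vertex to each of three of its four vertices. $X_3$ is the 7-vertex graph obtained from the domino (two 4-cycles sharing exactly one edge, 6 vertices) by attaching one new pendant vertex to one endpoint of the shared edge. A graph is an almost bipartite permutation graph if it contains none of $T_2, X_2, X_3, K_3, C_5, C_6, C_7, C_8, C_9$ as an induced subgraph. *)

theory Defs
  imports Main
begin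

definition simple_graph :: "'a set \<Rightarrow> ('a \<Rightarrow> 'a \<Rightarrow> bool) \<Rightarrow> bool" where
  "simple_graph V E \<longleftrightarrow> finite V \<and> (\<forall>x y. E x y \<longrightarrow> x \<in> V \<and> y \<in> V)
     \<and> (\<forall>x y. E x y \<longrightarrow> E y x) \<and> (\<forall>x. \<not> E x x)"

definition connected_graph :: "'a set \<Rightarrow> ('a \<Rightarrow> 'a \<Rightarrow> bool) \<Rightarrow> bool" where
  "connected_graph V E \<longleftrightarrow> V \<noteq> {} \<and> (\<forall>x\<in>V. \<forall>y\<in>V. E\<^sup>*\<^sup>* x y)"

definition induced_emb :: "'a set \<Rightarrow> ('a \<Rightarrow> 'a \<Rightarrow> bool) \<Rightarrow> 'b set \<Rightarrow> ('b \<Rightarrow> 'b \<Rightarrow> bool) \<Rightarrow> ('b \<Rightarrow> 'a) \<Rightarrow> bool" where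
  "induced_emb V E W F f \<longleftrightarrow> inj_on f W \<and> f ` W \<subseteq> V \<and>
     (\<forall>x\<in>W. \<forall>y\<in>W. E (f x) (f y) \<longleftrightarrow> F x y)"

definition contains_induced :: "'a set \<Rightarrow> ('a \<Rightarrow> 'a \<Rightarrow> bool) \<Rightarrow> 'b set \<Rightarrow> ('b \<Rightarrow> 'b \<Rightarrow> bool) \<Rightarrow> bool" where
  "contains_induced V E W F \<longleftrightarrow> (\<exists>f. induced_emb V E W F f)"

definition cycle_adj :: "nat \<Rightarrow> nat \<Rightarrow> nat \<Rightarrow> bool" where
  "cycle_adj k i j \<longleftrightarrow> i \<noteq> j \<and> (j = Suc i mod k \<or> i = Suc j mod k)"

definition adj_of :: "(nat \<times> nat) set \<Rightarrow> nat \<Rightarrow> nat \<Rightarrow> bool" where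
  "adj_of S x y \<longleftrightarrow> (x, y) \<in> S \<or> (y, x) \<in> S"

text \<open>T2: claw with centre 0, leaves 1,2,3 each subdivided (by 4,5,6).\<close>
definition T2_adj :: "nat \<Rightarrow> nat \<Rightarrow> bool" where
  "T2_adj = adj_of {(0,1),(0,2),(0,3),(1,4),(2,5),(3,6)}"

text \<open>X2: 4-cycle 0-1-2-3-0 with pendants 4,5,6 at 0,1,2.\<close>
definition X2_adj :: "nat \<Rightarrow> nat \<Rightarrow> bool" where
  "X2_adj = adj_of {(0,1),(1,2),(2,3),(3,0),(0,4),(1,5),(2,6)}"

text \<open>X3: domino = 4-cycles 0-1-4-3-0 and 1-2-5-4-1 sharing edge 1-4,
  plus pendant 6 at 1.\<close>
definition X3_adj :: "nat \<Rightarrow> nat \<Rightarrow> bool" where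
  "X3_adj = adj_of {(0,1),(1,2),(3,4),(4,5),(0,3),(1,4),(2,5),(1,6)}"

definition almost_bipartite_permutation_graph :: "'a set \<Rightarrow> ('a \<Rightarrow> 'a \<Rightarrow> bool) \<Rightarrow> bool" where
  "almost_bipartite_permutation_graph V E \<longleftrightarrow>
     \<not> contains_induced V E {0..<7::nat} T2_adj \<and>
     \<not> contains_induced V E {0..<7::nat} X2_adj \<and>
     \<not> contains_induced V E {0..<7::nat} X3_adj \<and>
     (\<forall>k\<in>{3,5,6,7,8,9}. \<not> contains_induced V E {0..<k::nat} (cycle_adj k))"

definition is_hole :: "'a set \<Rightarrow> ('a \<Rightarrow> 'a \<Rightarrow> bool) \<Rightarrow> 'a set \<Rightarrow> bool" where
  "is_hole V E H \<longleftrightarrow> (\<exists>k\<ge>5. \<exists>f. induced_emb V E {0..<k} (cycle_adj k) f \<and> f ` {0..<k} = H)"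

definition dominating :: "'a set \<Rightarrow> ('a \<Rightarrow> 'a \<Rightarrow> bool) \<Rightarrow> 'a set \<Rightarrow> bool" where
  "dominating V E D \<longleftrightarrow> D \<subseteq> V \<and> (\<forall>v\<in>V. v \<in> D \<or> (\<exists>u\<in>D. E v u))"

end

theory Submission
  imports Defs
begin

lemma emb_list:
  assumes "distinct xs" "set xs \<subseteq> V" "length xs = n"
    "\<forall>a<n. \<forall>b<n. E (xs!a) (xs!b) = F a b"
  shows "contains_induced V E {0..<n} F"
  unfolding contains_induced_def induced_emb_def
proof (intro exI[of _ "(!) xs"] conjI)
  show "inj_on ((!) xs) {0..<n}" using assms(1,3)
    by (auto simp: inj_on_def nth_eq_iff_index_eq)
  show "(!) xs ` {0..<n} \<subseteq> V" using assms(2,3) by auto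
  show "\<forall>x\<in>{0..<n}. \<forall>y\<in>{0..<n}. E (xs ! x) (xs ! y) = F x y"
    using assms(4) by auto
qed

lemma cyc_adj_iff:
  assumes "a < k" "b < k"
  shows "cycle_adj k a b \<longleftrightarrow> a \<noteq> b \<and> (b = a+1 \<or> a = b+1 \<or> (a = k-1 \<and> b=0) \<or> (b=k-1 \<and> a=0))"
proof -
  have h: "\<And>x. x < k \<Longrightarrow> Suc x mod k = (if Suc x = k then 0 else Suc x)" by auto
  show ?thesis using assms unfolding cycle_adj_def h[OF assms(1)] h[OF assms(2)] by auto
qed

lemma mod_cancel_nat: "((a::nat) + r) mod k = (b + r) mod k \<longleftrightarrow> a mod k = b mod k"
  by (simp add: nat_mod_eq_iff)

lemma rot_adj:
  assumes "a < k" "b < k"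
  shows "cycle_adj k ((a+r) mod k) ((b+r) mod k) \<longleftrightarrow> cycle_adj k a b"
proof -
  have k: "k > 0" using assms by auto
  have e1: "((b+r) mod k = Suc ((a+r) mod k) mod k) \<longleftrightarrow> b = Suc a mod k"
  proof -
    have "Suc ((a+r) mod k) mod k = (Suc a + r) mod k" by (simp add: mod_Suc_eq)
    then show ?thesis using mod_cancel_nat[of b r k "Suc a"] assms by simp
  qed
  have e2: "((a+r) mod k = Suc ((b+r) mod k) mod k) \<longleftrightarrow> a = Suc b mod k"
  proof -
    have "Suc ((b+r) mod k) mod k = (Suc b + r) mod k" by (simp add: mod_Suc_eq)
    then show ?thesis using mod_cancel_nat[of a r k "Suc b"] assms by simp
  qed
  have e3: "(a+r) mod k = (b+r) mod k \<longleftrightarrow> a = b" using mod_cancel_nat[of a r k b] assms by simp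
  show ?thesis unfolding cycle_adj_def using e1 e2 e3 by blast
qed

lemma rot_emb:
  assumes "induced_emb V E {0..<k} (cycle_adj k) g" "k > 0"
  shows "induced_emb V E {0..<k} (cycle_adj k) (\<lambda>j. g ((j + r) mod k))
    \<and> (\<lambda>j. g ((j + r) mod k)) ` {0..<k} = g ` {0..<k}"
proof -
  have ig: "inj_on g {0..<k}" and sub: "g ` {0..<k} \<subseteq> V"
    and ad: "\<forall>x\<in>{0..<k}. \<forall>y\<in>{0..<k}. E (g x) (g y) = cycle_adj k x y"
    using assms(1) unfolding induced_emb_def by auto
  have inj: "inj_on (\<lambda>j. g ((j + r) mod k)) {0..<k}"
  proof (rule inj_onI)
    fix x y assume "x \<in> {0..<k}" "y \<in> {0..<k}" "g ((x + r) mod k) = g ((y + r) mod k)"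
    then have "(x + r) mod k = (y + r) mod k" using ig assms(2) by (auto dest: inj_onD)
    then show "x = y" using mod_cancel_nat[of x r k y] \<open>x \<in> {0..<k}\<close> \<open>y \<in> {0..<k}\<close> by simp
  qed
  have img: "(\<lambda>j. g ((j + r) mod k)) ` {0..<k} = g ` {0..<k}"
  proof
    show "(\<lambda>j. g ((j + r) mod k)) ` {0..<k} \<subseteq> g ` {0..<k}" using assms(2) by auto
    show "g ` {0..<k} \<subseteq> (\<lambda>j. g ((j + r) mod k)) ` {0..<k}"
    proof
      fix z assume "z \<in> g ` {0..<k}"
      then obtain a where a: "a < k" "z = g a" by auto
      define j where "j = (a + (k - r mod k)) mod k"
      have "(j + r) mod k = (a + (k - r mod k) + r) mod k" unfolding j_def by (simp add: mod_add_left_eq)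
      also have "\<dots> = (a + (k - r mod k) + r mod k) mod k" by (simp add: mod_add_right_eq)
      also have "\<dots> = (a + k) mod k" using assms(2)
        by (metis add.assoc le_add_diff_inverse2 mod_le_divisor)
      also have "\<dots> = a" using a by simp
      finally have "z = g ((j + r) mod k)" using a by simp
      moreover have "j < k" unfolding j_def using assms(2) by simp
      ultimately show "z \<in> (\<lambda>j. g ((j + r) mod k)) ` {0..<k}" by auto
    qed
  qed
  have "\<forall>x\<in>{0..<k}. \<forall>y\<in>{0..<k}. E (g ((x + r) mod k)) (g ((y + r) mod k)) = cycle_adj k x y"
    using ad rot_adj assms(2) by simp
  then show ?thesis using inj img sub unfolding induced_emb_def by auto
qed

lemma all7: "(\<forall>x<(7::nat). P x) \<longleftrightarrow> P 0 \<and> P 1 \<and> P 2 \<and> P 3 \<and> P 4 \<and> P 5 \<and> P 6"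
proof -
  have "x < 7 \<longleftrightarrow> x = 0 \<or> x = 1 \<or> x = 2 \<or> x = 3 \<or> x = 4 \<or> x = 5 \<or> x = (6::nat)" for x by arith
  then show ?thesis by auto
qed

lemma all3: "(\<forall>x<(3::nat). P x) \<longleftrightarrow> P 0 \<and> P 1 \<and> P 2"
proof -
  have "x < 3 \<longleftrightarrow> x = 0 \<or> x = 1 \<or> x = (2::nat)" for x by arith
  then show ?thesis by auto
qed

lemma no_tri:
  assumes sg: "simple_graph V E" and ab: "almost_bipartite_permutation_graph V E"
    and e: "E a b" "E b c" "E a c"
  shows False
proof -
  have irr: "\<And>x. \<not> E x x" and inV: "\<And>x y. E x y \<Longrightarrow> x \<in> V \<and> y \<in> V"
    and sym: "\<And>x y. E x y \<Longrightarrow> E y x" using sg unfolding simple_graph_def by auto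
  have d: "a \<noteq> b" "b \<noteq> c" "a \<noteq> c" using e irr by auto
  have "contains_induced V E {0..<3} (cycle_adj 3)"
  proof (rule emb_list)
    show "distinct [a,b,c]" using d by simp
    show "set [a,b,c] \<subseteq> V" using inV e by auto
    show "length [a,b,c] = 3" by simp
    show "\<forall>x<3. \<forall>y<3. E ([a,b,c]!x) ([a,b,c]!y) = cycle_adj 3 x y"
      using e sym[OF e(1)] sym[OF e(2)] sym[OF e(3)] irr by (simp add: all3 cycle_adj_def)
  qed
  then show False using ab unfolding almost_bipartite_permutation_graph_def by simp
qed

lemma hole_facts:
  assumes "induced_emb V E {0..<k} (cycle_adj k) g"
  shows "\<And>a b. a < k \<Longrightarrow> b < k \<Longrightarrow> E (g a) (g b) \<longleftrightarrow> (a \<noteq> b \<and> (b = a+1 \<or> a = b+1 \<or> (a = k-1 \<and> b=0) \<or> (b=k-1 \<and> a=0)))"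
    and "\<And>a b. a < k \<Longrightarrow> b < k \<Longrightarrow> g a = g b \<longleftrightarrow> a = b"
    and "\<And>a. a < k \<Longrightarrow> g a \<in> V"
  using assms unfolding induced_emb_def
  by (auto simp: cyc_adj_iff inj_on_def)

lemma caseB:
  assumes sg: "simple_graph V E" and ab: "almost_bipartite_permutation_graph V E"
    and emb: "induced_emb V E {0..<k} (cycle_adj k) g" and k6: "6 \<le> k"
    and uV: "u \<in> V" and wV: "w \<in> V" and wu: "E w u" and u0: "E u (g 0)"
    and nw: "\<And>j. j < k \<Longrightarrow> \<not> E w (g j)"
    and nu: "\<And>j. j < k \<Longrightarrow> u \<noteq> g j"
    and nwg: "\<And>j. j < k \<Longrightarrow> w \<noteq> g j"
    and n2: "\<not> E u (g 2)" and nk2: "\<not> E u (g (k-2))"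
  shows False
proof -
  have irr: "\<And>x. \<not> E x x" and inV: "\<And>x y. E x y \<Longrightarrow> x \<in> V \<and> y \<in> V"
    and sym: "\<And>x y. E x y \<Longrightarrow> E y x" using sg unfolding simple_graph_def by auto
  note hf = hole_facts[OF emb]
  have "E (g 0) (g 1)" "E (g 0) (g (k-1))" using hf(1)[of 0 1] hf(1)[of 0 "k-1"] k6 by auto
  then have n1: "\<not> E u (g 1)" and nk1: "\<not> E u (g (k-1))"
    using no_tri[OF sg ab, of u "g 0"] u0 by blast+
  have nw': "\<And>j. j < k \<Longrightarrow> \<not> E (g j) w" using nw sym by blast
  have uw: "u \<noteq> w" using wu irr by auto
  have esym: "\<And>x y. E x y \<longleftrightarrow> E y x" using sym by blast
  let ?xs = "[g 0, g 1, g (k-1), u, g 2, g (k-2), w]"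
  have "contains_induced V E {0..<7} T2_adj"
  proof (rule emb_list)
    show "distinct ?xs" using k6 uw nu[of 0] nu[of 1] nu[of "k-1"] nu[of 2] nu[of "k-2"]
        nwg[of 0] nwg[of 1] nwg[of "k-1"] nwg[of 2] nwg[of "k-2"] by (auto simp: hf(2))
    show "set ?xs \<subseteq> V" using k6 uV wV by (auto simp: hf(3))
    show "length ?xs = 7" by simp
    show "\<forall>x<7. \<forall>y<7. E (?xs!x) (?xs!y) = T2_adj x y"
      using k6 u0 n1 nk1 n2 nk2 wu sym[OF u0] sym[OF wu] irr nw nw'
      by (auto simp: all7 T2_adj_def adj_of_def hf(1) esym)
  qed
  then show False using ab unfolding almost_bipartite_permutation_graph_def by simp
qed

lemma caseA:
  assumes sg: "simple_graph V E" and ab: "almost_bipartite_permutation_graph V E"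
    and emb: "induced_emb V E {0..<k} (cycle_adj k) g" and k6: "6 \<le> k"
    and uV: "u \<in> V" and wV: "w \<in> V" and wu: "E w u" and u0: "E u (g 0)"
    and nw: "\<And>j. j < k \<Longrightarrow> \<not> E w (g j)"
    and nu: "\<And>j. j < k \<Longrightarrow> u \<noteq> g j"
    and nwg: "\<And>j. j < k \<Longrightarrow> w \<noteq> g j"
    and u2: "E u (g 2)"
  shows False
proof -
  have irr: "\<And>x. \<not> E x x" and inV: "\<And>x y. E x y \<Longrightarrow> x \<in> V \<and> y \<in> V"
    and sym: "\<And>x y. E x y \<Longrightarrow> E y x" using sg unfolding simple_graph_def by auto
  note hf = hole_facts[OF emb]
  have "E (g 0) (g 1)" "E (g 0) (g (k-1))" "E (g 2) (g 1)" "E (g 2) (g 3)"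
    using hf(1)[of 0 1] hf(1)[of 0 "k-1"] hf(1)[of 2 1] hf(1)[of 2 3] k6 by auto
  then have n1: "\<not> E u (g 1)" and nk1: "\<not> E u (g (k-1))" and n3: "\<not> E u (g 3)"
    using no_tri[OF sg ab, of u "g 0"] no_tri[OF sg ab, of u "g 2"] u0 u2 by blast+
  have nw': "\<And>j. j < k \<Longrightarrow> \<not> E (g j) w" using nw sym by blast
  have uw: "u \<noteq> w" using wu irr by auto
  have esym: "\<And>x y. E x y \<longleftrightarrow> E y x" using sym by blast
  let ?xs = "[g 0, u, g 2, g 1, g (k-1), w, g 3]"
  have "contains_induced V E {0..<7} X2_adj"
  proof (rule emb_list)
    show "distinct ?xs" using k6 uw nu[of 0] nu[of 1] nu[of "k-1"] nu[of 2] nu[of 3]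
        nwg[of 0] nwg[of 1] nwg[of "k-1"] nwg[of 2] nwg[of 3] by (auto simp: hf(2))
    show "set ?xs \<subseteq> V" using k6 uV wV by (auto simp: hf(3))
    show "length ?xs = 7" by simp
    show "\<forall>x<7. \<forall>y<7. E (?xs!x) (?xs!y) = X2_adj x y"
      using k6 u0 u2 n1 nk1 n3 wu sym[OF u0] sym[OF u2] sym[OF wu] irr nw nw'
      by (auto simp: all7 X2_adj_def adj_of_def hf(1) esym)
  qed
  then show False using ab unfolding almost_bipartite_permutation_graph_def by simp
qed

lemma path_cross:
  assumes "E\<^sup>*\<^sup>* a b" "P b" "\<not> P a"
  shows "\<exists>x y. E x y \<and> \<not> P x \<and> P y"
  using assms by (induction rule: converse_rtranclp_induct) auto

theorem proposition3p3:
  fixes V :: "'a set" and E :: "'a \<Rightarrow> 'a \<Rightarrow> bool" and H :: "'a set"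
  assumes "simple_graph V E"
    and "connected_graph V E"
    and "almost_bipartite_permutation_graph V E"
    and "is_hole V E H"
  shows "dominating V E H"
proof -
  note sg = assms(1) and ab = assms(3)
  have inV: "\<And>x y. E x y \<Longrightarrow> x \<in> V \<and> y \<in> V"
    using sg unfolding simple_graph_def by auto
  obtain k f where k5: "k \<ge> 5" and emb: "induced_emb V E {0..<k} (cycle_adj k) f"
    and img: "f ` {0..<k} = H"
    using assms(4) unfolding is_hole_def by blast
  have "k \<noteq> 5"
  proof
    assume "k = 5"
    then have "contains_induced V E {0..<5::nat} (cycle_adj 5)"
      using emb unfolding contains_induced_def by blast
    then show False using ab unfolding almost_bipartite_permutation_graph_def by simp
  qed
  with k5 have k6: "k \<ge> 6" by simp
  have HV: "H \<subseteq> V" using emb img unfolding induced_emb_def by auto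
  show ?thesis
  proof (rule ccontr)
    assume "\<not> dominating V E H"
    then obtain v where v: "v \<in> V" "v \<notin> H" "\<not> (\<exists>u\<in>H. E v u)"
      using HV unfolding dominating_def by blast
    define P where "P x \<longleftrightarrow> x \<in> H \<or> (\<exists>u\<in>H. E x u)" for x
    have f0: "f 0 \<in> H" using img k6 by auto
    then have "E\<^sup>*\<^sup>* v (f 0)" using assms(2) v HV unfolding connected_graph_def by blast
    then obtain w u where wu: "E w u" and nPw: "\<not> P w" and Pu: "P u"
      using path_cross[of E v "f 0" P] f0 v unfolding P_def by blast
    have uH: "u \<notin> H" using nPw wu unfolding P_def by blast
    then obtain i where i: "i < k" "E u (f i)" using Pu img unfolding P_def by auto
    have uV: "u \<in> V" and wV: "w \<in> V" using inV wu by auto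
    define g where "g = (\<lambda>j. f ((j + i) mod k))"
    have embg: "induced_emb V E {0..<k} (cycle_adj k) g" and imgg: "g ` {0..<k} = H"
      using rot_emb[OF emb, of i] k6 img unfolding g_def by auto
    have u0: "E u (g 0)" using i unfolding g_def by simp
    have nw: "\<And>j. j < k \<Longrightarrow> \<not> E w (g j)" using nPw imgg unfolding P_def by auto
    have nu: "\<And>j. j < k \<Longrightarrow> u \<noteq> g j" using uH imgg by auto
    have nwg: "\<And>j. j < k \<Longrightarrow> w \<noteq> g j" using nPw imgg unfolding P_def by auto
    show False
    proof (cases "E u (g 2)")
      case True
      then show False using caseA[OF sg ab embg k6 uV wV wu u0 nw nu nwg] by blast
    next
      case n2: False
      show False
      proof (cases "E u (g (k-2))")
        case True
        define g2 where "g2 = (\<lambda>j. g ((j + (k-2)) mod k))"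
        have embg2: "induced_emb V E {0..<k} (cycle_adj k) g2" and imgg2: "g2 ` {0..<k} = H"
          using rot_emb[OF embg, of "k-2"] k6 imgg unfolding g2_def by auto
        have a0: "E u (g2 0)" using True k6 unfolding g2_def by simp
        have "2 + (k-2) = k" using k6 by simp
        then have "(2 + (k-2)) mod k = 0" by simp
        then have a2: "E u (g2 2)" using u0 k6 unfolding g2_def by simp
        have nw2: "\<And>j. j < k \<Longrightarrow> \<not> E w (g2 j)" using nPw imgg2 unfolding P_def by auto
        have nu2: "\<And>j. j < k \<Longrightarrow> u \<noteq> g2 j" using uH imgg2 by auto
        have nwg2: "\<And>j. j < k \<Longrightarrow> w \<noteq> g2 j" using nPw imgg2 unfolding P_def by auto
        show False using caseA[OF sg ab embg2 k6 uV wV wu a0 nw2 nu2 nwg2 a2] .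
      next
        case False
        then show False using caseB[OF sg ab embg k6 uV wV wu u0 nw nu nwg n2] by blast
      qed
    qed
  qed
qed

end
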